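(* Let $p\in\mathbb{Z}^d$ with $\gcd(p_1,\dots,p_d)=1$. The problem $\Delta_p g(k)=0$ for $k>0$, $g(0)=1$, $g(k)=0$ for $k<0$, $\sup_{k>0}|g(k)|<\infty$ has a unique solution $g:\mathbb{Z}\to\mathbb{R}$, the limit $\lim_{k\to\infty}g(k)$ exists, and $$H(p)=|p|^2\lim_{k\to\infty}g(k),$$ where $\Delta_p g(k)=\sum_{j=1}^d\big(g(k+p_j)+g(k-p_j)-2g(k)\big)$.
   Context: Discrete Laplacian on $\mathbb{Z}^d$: $\Delta u(x)=\sum_{i=1}^d(u(x+e_i)+u(x-e_i)-2u(x))$. For $p\ne0$, $H(p)=\Delta u_p(0)$ where $u_p$ is the unique solution of $\Delta u=0$ on $\{p\cdot x>0\}$, $u=0$ on $\{p\cdot x\le0\}$, $\sup_{p\cdot x>0}|u(x)-p\cdot x|<\infty$. *)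

theory Defs
  imports "HOL-Analysis.Analysis"
begin

text \<open>Lattice points of Z^d are vectors of type int ^ 'd (d = CARD('d)).\<close>

definition idot :: "int ^ 'd \<Rightarrow> int ^ 'd \<Rightarrow> int" where
  "idot p x = (\<Sum>i\<in>UNIV. p $ i * x $ i)"

definition unitv :: "'d::finite \<Rightarrow> int ^ 'd" where
  "unitv i = (\<chi> j. if j = i then 1 else 0)"

definition dlap :: "(int ^ 'd \<Rightarrow> real) \<Rightarrow> int ^ 'd \<Rightarrow> real" where
  "dlap u x = (\<Sum>i\<in>UNIV. u (x + unitv i) + u (x - unitv i) - 2 * u x)"

definition halfspace_sol :: "int ^ 'd \<Rightarrow> (int ^ 'd \<Rightarrow> real) \<Rightarrow> bool" where
  "halfspace_sol p u \<longleftrightarrow>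
     (\<forall>x. idot p x > 0 \<longrightarrow> dlap u x = 0) \<and>
     (\<forall>x. idot p x \<le> 0 \<longrightarrow> u x = 0) \<and>
     (\<exists>M. \<forall>x. idot p x > 0 \<longrightarrow> \<bar>u x - real_of_int (idot p x)\<bar> \<le> M)"

definition Hfun :: "int ^ 'd \<Rightarrow> real" where
  "Hfun p = dlap (THE u. halfspace_sol p u) 0"

definition dlap1 :: "int ^ 'd \<Rightarrow> (int \<Rightarrow> real) \<Rightarrow> int \<Rightarrow> real" where
  "dlap1 p g k = (\<Sum>j\<in>UNIV. g (k + p $ j) + g (k - p $ j) - 2 * g k)"

definition line_sol :: "int ^ 'd \<Rightarrow> (int \<Rightarrow> real) \<Rightarrow> bool" where
  "line_sol p g \<longleftrightarrow>
     (\<forall>k>0. dlap1 p g k = 0) \<and> g 0 = 1 \<and> (\<forall>k<0. g k = 0) \<and>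
     (\<exists>M. \<forall>k>0. \<bar>g k\<bar> \<le> M)"

end

theory Submission
  imports Defs
begin

lemma idot_add: "idot p (x + y) = idot p x + idot p y"
  by (simp add: idot_def algebra_simps sum.distrib)
lemma idot_diff: "idot p (x - y) = idot p x - idot p y"
  by (simp add: idot_def algebra_simps sum_subtractf)
lemma idot_unitv: "idot p (unitv i) = p $ i"
  by (simp add: idot_def unitv_def if_distrib cong: if_cong)
lemma idot_zero: "idot p 0 = 0"
  by (simp add: idot_def)

lemma dlap_comp: "dlap (\<lambda>x. h (idot p x)) x = dlap1 p h (idot p x)"
  by (simp add: dlap_def dlap1_def idot_add idot_diff idot_unitv)

locale gp =
  fixes p :: "int ^ 'd::finite"
  assumes gcd1: "Gcd (range (\<lambda>i. p $ i)) = 1"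
begin

definition q :: "'d \<Rightarrow> int" where "q j = \<bar>p $ j\<bar>"
definition mm :: int where "mm = Max (range q)"

lemma q_nonneg: "q j \<ge> 0" by (simp add: q_def)
lemma q_le_mm: "q j \<le> mm" unfolding mm_def by (rule Max_ge) auto

lemma exists_nonzero: "\<exists>j. p $ j \<noteq> 0"
proof (rule ccontr)
  assume "\<not> ?thesis"
  then have "range (\<lambda>i. p $ i) = {0}" by auto
  then show False using gcd1 by simp
qed

lemma mm_pos: "mm \<ge> 1"
proof -
  obtain j where "p $ j \<noteq> 0" using exists_nonzero by blast
  then have "q j \<ge> 1" by (simp add: q_def)
  then show ?thesis using q_le_mm[of j] by simp
qed

lemma dlap1_q: "dlap1 p g k = (\<Sum>j\<in>UNIV. g (k + q j) + g (k - q j) - 2 * g k)"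
  unfolding dlap1_def q_def
  by (rule sum.cong) (auto simp: abs_if)

lemma dlap1_lin: "dlap1 p (\<lambda>k. a * x k + b * y k) k = a * dlap1 p x k + b * dlap1 p y k"
  unfolding dlap1_def sum_distrib_left sum.distrib[symmetric]
  by (rule sum.cong) (auto simp: algebra_simps)

lemma dlap1_add: "dlap1 p (\<lambda>k. x k + y k) k = dlap1 p x k + dlap1 p y k"
  using dlap1_lin[of 1 x 1 y k] by simp
lemma dlap1_diff: "dlap1 p (\<lambda>k. x k - y k) k = dlap1 p x k - dlap1 p y k"
  using dlap1_lin[of 1 x "-1" y k] by simp
lemma dlap1_cmult: "dlap1 p (\<lambda>k. a * x k) k = a * dlap1 p x k"
  using dlap1_lin[of a x 0 x k] by simp
lemma dlap1_const: "dlap1 p (\<lambda>k. c) k = 0"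
  by (simp add: dlap1_def)
lemma dlap1_id: "dlap1 p (\<lambda>k. real_of_int k) k = 0"
  by (simp add: dlap1_def)
lemma dlap1_shift: "dlap1 p (\<lambda>k. x (k + t)) k = dlap1 p x (k + t)"
  by (simp add: dlap1_def algebra_simps)

lemma dlap1_local:
  assumes "\<And>i. k - mm \<le> i \<Longrightarrow> i \<le> k + mm \<Longrightarrow> x i = y i"
  shows "dlap1 p x k = dlap1 p y k"
  unfolding dlap1_q
proof (rule sum.cong)
  fix j
  have "q j \<ge> 0" "q j \<le> mm" using q_nonneg q_le_mm by auto
  then show "x (k + q j) + x (k - q j) - 2 * x k = y (k + q j) + y (k - q j) - 2 * y k"
    using assms[of "k + q j"] assms[of "k - q j"] assms[of k] by auto
qed simp

lemma bezout: "\<exists>c::'d \<Rightarrow> int. (\<Sum>j\<in>UNIV. c j * p $ j) = 1"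
proof -
  define I where "I = {n. \<exists>c::'d \<Rightarrow> int. (\<Sum>j\<in>UNIV. c j * p $ j) = n}"
  have I_p: "p $ j \<in> I" for j
    unfolding I_def mem_Collect_eq by (rule exI[of _ "\<lambda>i. if i = j then 1 else 0"]) (simp add: if_distrib[where f="\<lambda>c. c * _"] cong: if_cong)
  have I_lin: "a * x + b * y \<in> I" if xI: "x \<in> I" and yI: "y \<in> I" for a b x y
  proof -
    obtain c1 where c1: "(\<Sum>j\<in>UNIV. c1 j * p $ j) = x" using xI unfolding I_def by blast
    obtain c2 where c2: "(\<Sum>j\<in>UNIV. c2 j * p $ j) = y" using yI unfolding I_def by blast
    have "(\<Sum>j\<in>UNIV. (a * c1 j + b * c2 j) * p $ j) = a * x + b * y"
      unfolding c1[symmetric] c2[symmetric]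
      by (simp add: sum.distrib sum_distrib_left algebra_simps)
    then show ?thesis unfolding I_def mem_Collect_eq by (rule exI[of _ "\<lambda>j. a * c1 j + b * c2 j"])
  qed
  obtain j0 where j0: "p $ j0 \<noteq> 0" using exists_nonzero by blast
  have "\<bar>p $ j0\<bar> \<in> I" using I_lin[OF I_p[of j0] I_p[of j0], of "sgn (p $ j0)" 0]
    by (simp add: abs_sgn mult.commute)
  then have ex: "\<exists>n. n \<in> I \<and> n > 0" using j0 by (intro exI[of _ "\<bar>p $ j0\<bar>"]) auto
  define g where "g = (LEAST n. n \<in> I \<and> n > 0)"
  have "\<exists>n::nat. int n \<in> I \<and> int n > 0" using ex by (metis zero_less_imp_eq_int)
  define gn where "gn = (LEAST n::nat. int n \<in> I \<and> int n > 0)"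
  have gn: "int gn \<in> I \<and> int gn > 0" unfolding gn_def
    by (rule LeastI_ex) fact
  have gn_min: "gn \<le> n" if "int n \<in> I" "int n > 0" for n
    unfolding gn_def by (rule Least_le) (use that in auto)
  have dv: "int gn dvd p $ j" for j
  proof -
    let ?r = "p $ j mod int gn"
    have r: "?r = 1 * p $ j + (- (p $ j div int gn)) * int gn"
      by (simp add: minus_div_mult_eq_mod[symmetric])
    have "?r \<in> I" unfolding r by (rule I_lin[OF I_p gn[THEN conjunct1]])
    moreover have "?r \<ge> 0" "?r < int gn" using gn by auto
    ultimately have "?r = 0"
      using gn_min[of "nat ?r"] by (cases "?r > 0") auto
    then show ?thesis by (simp add: dvd_eq_mod_eq_0)
  qed
  have "int gn dvd Gcd (range (\<lambda>i. p $ i))" by (rule Gcd_greatest) (use dv in auto)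
  then have "int gn = 1" using gcd1 gn by simp
  then show ?thesis using gn unfolding I_def by auto
qed

lemma idot_surj: "\<exists>x. idot p x = n"
proof -
  obtain c where c: "(\<Sum>j\<in>UNIV. c j * p $ j) = 1" using bezout by blast
  have "idot p (\<chi> j. n * c j) = n * (\<Sum>j\<in>UNIV. c j * p $ j)"
    by (simp add: idot_def sum_distrib_left algebra_simps)
  then show ?thesis using c by auto
qed

end

context gp begin

lemma idot_unitv_bound: "idot p (y + unitv i) \<ge> idot p y - mm" "idot p (y - unitv i) \<ge> idot p y - mm"
  using q_le_mm[of i] by (auto simp: idot_add idot_diff idot_unitv q_def)

lemma dlap_lin_sub: "dlap (\<lambda>y. v y - \<epsilon> * real_of_int (idot p y)) y = dlap v y"
  unfolding dlap_def
  by (rule sum.cong) (auto simp: idot_add idot_diff algebra_simps)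

lemma key_step:
  fixes \<phi> :: "int^'d \<Rightarrow> real" and e :: "int^'d"
  assumes harm: "dlap \<phi> y = 0"
  and e: "e = unitv j0 \<or> e = - unitv j0"
  and nb: "\<And>i. \<phi> (y + unitv i) \<le> S" "\<And>i. \<phi> (y - unitv i) \<le> S"
  shows "S - \<phi> (y + e) \<le> 2 * real CARD('d) * (S - \<phi> y)"
proof -
  define T where "T i = \<phi> (y + unitv i) + \<phi> (y - unitv i)" for i
  have sumT: "(\<Sum>i\<in>UNIV. T i) = 2 * real CARD('d) * \<phi> y"
  proof -
    have "(\<Sum>i\<in>UNIV. T i - 2 * \<phi> y) = 0" using harm unfolding dlap_def T_def by simp
    then show ?thesis by (simp add: sum_subtractf)
  qed
  have Tj0: "T j0 \<le> \<phi> (y + e) + S"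
    using e
  proof
    assume "e = unitv j0"
    then show ?thesis using nb(2)[of j0] unfolding T_def by simp
  next
    assume "e = - unitv j0"
    then have "y + e = y - unitv j0" by simp
    then show ?thesis using nb(1)[of j0] unfolding T_def by simp
  qed
  have "(\<Sum>i\<in>UNIV - {j0}. T i) \<le> of_nat (card (UNIV - {j0})) * (2 * S)"
  proof (rule sum_bounded_above)
    fix i show "T i \<le> 2 * S" using nb(1)[of i] nb(2)[of i] unfolding T_def by linarith
  qed
  also have "of_nat (card (UNIV - {j0::'d})) = real CARD('d) - 1"
    by (simp add: card_Diff_singleton of_nat_diff)
  finally have rest: "(\<Sum>i\<in>UNIV - {j0}. T i) \<le> (real CARD('d) - 1) * (2 * S)" .
  have "(\<Sum>i\<in>UNIV. T i) = T j0 + (\<Sum>i\<in>UNIV - {j0}. T i)"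
    by (rule sum.remove) auto
  then have "2 * real CARD('d) * \<phi> y \<le> \<phi> (y + e) + S + (real CARD('d) - 1) * (2 * S)"
    using sumT Tj0 rest by linarith
  then show ?thesis by (simp add: algebra_simps)
qed

lemma mp_d:
  fixes v :: "int^'d \<Rightarrow> real"
  assumes harm: "\<forall>x. idot p x > 0 \<longrightarrow> dlap v x = 0"
  and bd: "\<forall>x. idot p x \<le> 0 \<longrightarrow> v x \<le> 0"
  and ub: "\<exists>M. \<forall>x. idot p x > 0 \<longrightarrow> v x \<le> M"
  shows "v x \<le> 0"
proof -
  obtain M0 where M0: "\<forall>x. idot p x > 0 \<longrightarrow> v x \<le> M0" using ub by blast
  define M where "M = max M0 0"
  have M: "\<forall>x. idot p x > 0 \<longrightarrow> v x \<le> M" "M \<ge> 0" using M0 unfolding M_def by force+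
  obtain j0 where j0: "p $ j0 \<noteq> 0" using exists_nonzero by blast
  define e where "e = (if p $ j0 > 0 then unitv j0 else - unitv j0)"
  have e_cases: "e = unitv j0 \<or> e = - unitv j0" unfolding e_def by auto
  have idot_e: "idot p (y + e) \<ge> idot p y + 1" for y
    using j0 by (auto simp: e_def idot_add idot_unitv idot_diff[of p 0, simplified] idot_zero
       diff_conv_add_uminus[symmetric])
  define D where "D = real CARD('d)"
  have D1: "D \<ge> 1" unfolding D_def by simp
  have main: "v y \<le> \<epsilon> * real_of_int (idot p y) + \<epsilon> * real_of_int mm"
    if eps: "\<epsilon> > 0" and ypos: "idot p y > 0" for \<epsilon> y
  proof -
    define N :: int where "N = \<lceil>M / \<epsilon>\<rceil>"
    have N0: "N \<ge> 0"
    proof -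
      have "0 \<le> M / \<epsilon>" using M eps by simp
      also have "\<dots> \<le> real_of_int N" unfolding N_def by (rule le_of_int_ceiling)
      finally show ?thesis by simp
    qed
    have MN: "M - \<epsilon> * real_of_int N \<le> 0"
    proof -
      have "M / \<epsilon> \<le> real_of_int N" unfolding N_def by simp
      then show ?thesis using eps by (simp add: field_simps)
    qed
    define \<phi> where "\<phi> z = v z - \<epsilon> * real_of_int (idot p z)" for z
    define R where "R = {z. idot p z \<ge> 1 - mm}"
    define B where "B = \<epsilon> * real_of_int mm"
    have B0: "B \<ge> 0" using eps mm_pos unfolding B_def by simp
    have phi_harm: "dlap \<phi> z = 0" if "idot p z > 0" for z
      unfolding \<phi>_def dlap_lin_sub using harm that by simp
    have phi_low: "\<phi> z \<le> B" if "z \<in> R" "idot p z \<le> 0" for z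
    proof -
      have "v z \<le> 0" using bd that by simp
      moreover have "- \<epsilon> * real_of_int (idot p z) \<le> \<epsilon> * real_of_int mm"
      proof -
        have "- real_of_int (idot p z) \<le> real_of_int mm" using that unfolding R_def by simp
        then have "\<epsilon> * (- real_of_int (idot p z)) \<le> \<epsilon> * real_of_int mm"
          using eps by (intro mult_left_mono) auto
        then show ?thesis by simp
      qed
      ultimately show ?thesis unfolding \<phi>_def B_def by simp
    qed
    have phi_high: "\<phi> z \<le> B" if "idot p z > N" for z
    proof -
      have "v z \<le> M" using M(1)[rule_format, of z] N0 that by linarith
      moreover have "\<epsilon> * real_of_int N \<le> \<epsilon> * real_of_int (idot p z)"
        using that eps by (simp add: mult_left_mono)
      ultimately show ?thesis unfolding \<phi>_def using MN B0 by linarith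
    qed
    have phi_ub: "\<phi> z \<le> M + B" if "z \<in> R" for z
    proof (cases "idot p z > 0")
      case True
      then have "v z \<le> M" using M(1) by blast
      moreover have "0 \<le> \<epsilon> * real_of_int (idot p z)" using True eps by simp
      ultimately show ?thesis unfolding \<phi>_def using B0 by linarith
    next
      case False
      then show ?thesis using phi_low[OF that] M(2) by linarith
    qed
    have bdd: "bdd_above (\<phi> ` R)" using phi_ub by (intro bdd_aboveI) auto
    have yR: "y \<in> R" using ypos mm_pos unfolding R_def by simp
    define S where "S = Sup (\<phi> ` R)"
    have phi_S: "\<phi> z \<le> S" if "z \<in> R" for z
      unfolding S_def using bdd that by (intro cSup_upper) auto
    have SB: "S \<le> B"
    proof (rule ccontr)
      assume "\<not> S \<le> B"
      then have SB: "S > B" by simp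
      define L where "L = nat N"
      define \<delta> where "\<delta> = (S - B) / (2 * D) ^ (L + 1)"
      have pow_pos: "(2 * D) ^ l > 0" for l using D1 by simp
      have \<delta>pos: "\<delta> > 0" unfolding \<delta>_def by (intro divide_pos_pos) (use SB in simp, rule pow_pos)
      have "S - \<delta> < Sup (\<phi> ` R)" using \<delta>pos unfolding S_def[symmetric] by simp
      from less_cSupD[OF _ this] obtain x where xR: "x \<in> R" and x: "S - \<delta> < \<phi> x"
        using yR by blast
      have xpos: "idot p x > 0"
      proof (rule ccontr)
        assume "\<not> ?thesis"
        then have "\<phi> x \<le> B" using phi_low xR by simp
        have "1 \<le> (2 * D) ^ (L + 1)" using D1 by (intro one_le_power) auto
        then have "\<delta> \<le> (S - B) / 1" unfolding \<delta>_def using SB pow_pos[of "L+1"]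
          by (intro divide_left_mono; (simp only: mult_1_right)?; linarith)
        then show False using x \<open>\<phi> x \<le> B\<close> by simp
      qed
      define xs where "xs l = ((\<lambda>z. z + e) ^^ l) x" for l
      have xs_idot: "idot p (xs l) \<ge> idot p x + int l" for l
      proof (induction l)
        case 0 then show ?case by (simp add: xs_def)
      next
        case (Suc l)
        have "xs (Suc l) = xs l + e" by (simp add: xs_def)
        then show ?case using idot_e[of "xs l"] Suc by simp
      qed
      have xs_R: "xs l \<in> R" for l using xs_idot[of l] xpos mm_pos unfolding R_def by simp
      have it: "S - \<phi> (xs l) \<le> (2 * D) ^ l * (S - \<phi> x)" for l
      proof (induction l)
        case 0 then show ?case by (simp add: xs_def)
      next
        case (Suc l)
        have eq: "xs (Suc l) = xs l + e" by (simp add: xs_def)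
        have pos: "idot p (xs l) > 0" using xs_idot[of l] xpos by simp
        have nb1: "\<phi> (xs l + unitv i) \<le> S" for i
          using phi_S idot_unitv_bound(1)[of "xs l" i] pos unfolding R_def by simp
        have nb2: "\<phi> (xs l - unitv i) \<le> S" for i
          using phi_S idot_unitv_bound(2)[of "xs l" i] pos unfolding R_def by simp
        have "S - \<phi> (xs (Suc l)) \<le> 2 * D * (S - \<phi> (xs l))"
          unfolding eq D_def by (rule key_step[OF phi_harm[OF pos] e_cases nb1 nb2])
        also have "\<dots> \<le> 2 * D * ((2 * D) ^ l * (S - \<phi> x))"
          using Suc D1 by (intro mult_left_mono) auto
        finally show ?case by (simp add: algebra_simps)
      qed
      have "idot p (xs L) > N" using xs_idot[of L] xpos N0 unfolding L_def by simp
      then have hiB: "\<phi> (xs L) \<le> B" by (rule phi_high)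
      have "S - B \<le> (2 * D) ^ L * (S - \<phi> x)" using it[of L] hiB by linarith
      also have "\<dots> < (2 * D) ^ L * \<delta>" using x pow_pos by (intro mult_strict_left_mono) auto
      also have "\<dots> = (S - B) / (2 * D)" unfolding \<delta>_def using pow_pos[of 1] by (simp add: field_simps)
      also have "\<dots> \<le> (S - B) / 2" using SB D1 by (intro divide_left_mono) auto
      finally show False using SB by simp
    qed
    have "\<phi> y \<le> B" by (rule order_trans[OF phi_S[OF yR] SB])
    then show ?thesis unfolding \<phi>_def B_def by linarith
  qed
  show ?thesis
  proof (cases "idot p x > 0")
    case False then show ?thesis using bd by simp
  next
    case True
    show ?thesis
    proof (rule ccontr)
      assume "\<not> v x \<le> 0"
      then have vx: "v x > 0" by simp
      define K where "K = real_of_int (idot p x) + real_of_int mm"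
      have K: "K > 0" using True mm_pos unfolding K_def by simp
      define \<epsilon> where "\<epsilon> = v x / (2 * K)"
      have "\<epsilon> > 0" unfolding \<epsilon>_def using vx K by simp
      from main[OF this True] have "v x \<le> \<epsilon> * K" unfolding K_def by (simp only: distrib_left)
      also have "\<epsilon> * K = v x / 2" unfolding \<epsilon>_def using K by simp
      finally show False using vx by simp
    qed
  qed
qed

end

context gp begin

lemma mp1:
  assumes harm: "\<forall>k>t. dlap1 p h k = 0"
  and bd: "\<forall>k. t - mm < k \<and> k \<le> t \<longrightarrow> h k \<le> 0"
  and ub: "\<exists>M. \<forall>k>t. h k \<le> M"
  and kt: "k > t"
  shows "h k \<le> 0"
proof -
  define h' where "h' k = (if k \<le> t - mm then 0 else h k)" for k
  define v where "v x = h' (idot p x + t)" for x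
  have dl: "dlap v x = dlap1 p h' (idot p x + t)" for x
  proof -
    have "dlap v x = dlap (\<lambda>x. (\<lambda>n. h' (n + t)) (idot p x)) x" unfolding v_def by simp
    also have "\<dots> = dlap1 p (\<lambda>n. h' (n + t)) (idot p x)" by (rule dlap_comp)
    also have "\<dots> = dlap1 p h' (idot p x + t)" by (rule dlap1_shift)
    finally show ?thesis .
  qed
  have loc: "dlap1 p h' k = dlap1 p h k" if "k > t" for k
    by (rule dlap1_local) (use that in \<open>auto simp: h'_def\<close>)
  have "v x \<le> 0" for x
  proof (rule mp_d)
    show "\<forall>x. 0 < idot p x \<longrightarrow> dlap v x = 0"
      using harm loc dl by simp
    show "\<forall>x. idot p x \<le> 0 \<longrightarrow> v x \<le> 0"
      using bd by (auto simp: v_def h'_def)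
    obtain M where M: "\<forall>k>t. h k \<le> M" using ub by blast
    have "\<forall>x. 0 < idot p x \<longrightarrow> v x \<le> M"
      using M mm_pos by (auto simp: v_def h'_def)
    then show "\<exists>M. \<forall>x. 0 < idot p x \<longrightarrow> v x \<le> M" by blast
  qed
  moreover obtain x where "idot p x = k - t" using idot_surj by blast
  ultimately have "h' k \<le> 0" unfolding v_def by (metis diff_add_cancel)
  then show ?thesis using kt mm_pos by (simp add: h'_def)
qed

lemma uniq1:
  assumes harm: "\<forall>k>t. dlap1 p h k = 0"
  and bd: "\<forall>k. t - mm < k \<and> k \<le> t \<longrightarrow> h k = 0"
  and ub: "\<exists>M. \<forall>k>t. \<bar>h k\<bar> \<le> M"
  and kt: "k > t"
  shows "h k = 0"
proof -
  obtain M where M: "\<forall>k>t. \<bar>h k\<bar> \<le> M" using ub by blast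
  have "h k \<le> 0" by (rule mp1[OF harm _ _ kt]) (use bd M in \<open>auto simp: abs_le_iff\<close>)
  moreover have "- h k \<le> 0"
  proof (rule mp1[where h="\<lambda>k. - h k", OF _ _ _ kt])
    show "\<forall>k>t. dlap1 p (\<lambda>k. - h k) k = 0" using harm dlap1_cmult[of "-1" h] by simp
  qed (use bd M in \<open>auto simp: abs_le_iff\<close>)
  ultimately show ?thesis by simp
qed

definition n0 :: nat where "n0 = card {j. q j \<noteq> 0}"

lemma n0_pos: "n0 \<ge> 1"
proof -
  obtain j where "p $ j \<noteq> 0" using exists_nonzero by blast
  then have "{j. q j \<noteq> 0} \<noteq> {}" by (auto simp: q_def)
  then show ?thesis unfolding n0_def by (simp add: Suc_le_eq card_gt_0_iff)
qed

lemma sum_if_q: "(\<Sum>j\<in>UNIV. if q j \<noteq> 0 then c else 0) = real n0 * c"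
proof -
  have "(\<Sum>j\<in>UNIV. if q j \<noteq> 0 then c else 0) = (\<Sum>j\<in>{j. q j \<noteq> 0}. c)"
    by (simp add: sum.If_cases)
  then show ?thesis by (simp add: n0_def)
qed

lemma perron:
  fixes \<phi> :: "int \<Rightarrow> real"
  shows "\<exists>h. (\<forall>k\<le>0. h k = \<phi> k) \<and> (\<forall>k>0. dlap1 p h k = 0) \<and> (\<exists>M. \<forall>k>0. \<bar>h k\<bar> \<le> M)"
proof -
  define Bs where "Bs = {1 - mm..0}"
  have finB: "finite Bs" and neB: "Bs \<noteq> {}" using mm_pos by (auto simp: Bs_def)
  define lo where "lo = Min (\<phi> ` Bs)"
  define hi where "hi = Max (\<phi> ` Bs)"
  have lohi: "lo \<le> \<phi> k" "\<phi> k \<le> hi" if "k \<in> Bs" for k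
    using that finB unfolding lo_def hi_def by auto
  have lohi0: "lo \<le> hi" using lohi neB by fastforce
  define S where "S = {v. (\<forall>k\<le>0. v k = \<phi> k) \<and> (\<forall>k>0. v k \<le> hi) \<and> (\<forall>k>0. dlap1 p v k \<ge> 0)}"
  have nb_range: "k - q j \<ge> 1 - mm" "k + q j \<ge> 1 - mm" if "k > 0" for k j
    using that q_le_mm[of j] q_nonneg[of j] by auto
  define v0 where "v0 k = (if k \<le> 0 then \<phi> k else lo)" for k
  have v0_ge: "v0 k \<ge> lo" if "k \<ge> 1 - mm" for k
    using that lohi by (auto simp: v0_def Bs_def)
  have v0S: "v0 \<in> S"
    unfolding S_def
  proof (intro CollectI conjI allI impI)
    fix k :: int assume k: "k > 0"
    show "v0 k \<le> hi" using k lohi0 by (simp add: v0_def)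
    show "dlap1 p v0 k \<ge> 0" unfolding dlap1_q
    proof (rule sum_nonneg)
      fix j
      have "v0 (k + q j) = lo" using k q_nonneg[of j] by (simp add: v0_def)
      moreover have "v0 (k - q j) \<ge> lo" using v0_ge nb_range[OF k] by simp
      moreover have "v0 k = lo" using k by (simp add: v0_def)
      ultimately show "v0 (k + q j) + v0 (k - q j) - 2 * v0 k \<ge> 0" by simp
    qed
  qed (simp add: v0_def)
  define h where "h k = (if k \<le> 0 then \<phi> k else Sup ((\<lambda>v. v k) ` S))" for k
  have bdd: "bdd_above ((\<lambda>v. v k) ` S)" if "k > 0" for k
    using that by (intro bdd_aboveI[of _ hi]) (auto simp: S_def)
  have le_h: "v k \<le> h k" if "v \<in> S" for v k
  proof (cases "k \<le> 0")
    case True then show ?thesis using that by (simp add: S_def h_def)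
  next
    case False
    then show ?thesis unfolding h_def using bdd[of k] that by (auto intro!: cSup_upper)
  qed
  have h_hi: "h k \<le> hi" if "k > 0" for k
    unfolding h_def using that v0S by (auto intro!: cSup_least simp: S_def)
  have h_lo: "lo \<le> h k" if "k > 0" for k
    using le_h[OF v0S, of k] that by (simp add: v0_def)
  have h_hi': "h k \<le> hi" if "k \<ge> 1 - mm" for k
    using that h_hi lohi by (cases "k \<le> 0") (auto simp: h_def Bs_def)
  define D where "D = real CARD('d)"
  have D1: "D \<ge> 1" unfolding D_def by simp
  have dlN: "dlap1 p x k = (\<Sum>j\<in>UNIV. x (k + q j) + x (k - q j)) - 2 * D * x k" for x k
    unfolding dlap1_q D_def by (simp add: sum_subtractf sum_distrib_left)
  have h_sub: "dlap1 p h k \<ge> 0" if k: "k > 0" for k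
  proof -
    define A where "A = (\<Sum>j\<in>UNIV. h (k + q j) + h (k - q j)) / (2 * D)"
    have "v k \<le> A" if "v \<in> S" for v
    proof -
      have "dlap1 p v k \<ge> 0" using that k by (simp add: S_def)
      then have "2 * D * v k \<le> (\<Sum>j\<in>UNIV. v (k + q j) + v (k - q j))" using dlN by simp
      also have "\<dots> \<le> (\<Sum>j\<in>UNIV. h (k + q j) + h (k - q j))"
        by (intro sum_mono add_mono le_h that)
      finally show ?thesis unfolding A_def using D1 by (simp add: field_simps)
    qed
    then have "h k \<le> A" unfolding h_def using k v0S by (auto intro!: cSup_least)
    then have "2 * D * h k \<le> (\<Sum>j\<in>UNIV. h (k + q j) + h (k - q j))"
      unfolding A_def using D1 by (simp add: field_simps)
    then show ?thesis using dlN by simp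
  qed
  have hS: "h \<in> S" unfolding S_def using h_hi h_sub by (auto simp: h_def)
  have h_harm: "dlap1 p h k = 0" if k0: "k > 0" for k
  proof (rule ccontr)
    assume "dlap1 p h k \<noteq> 0"
    then have pos: "dlap1 p h k > 0" using h_sub[OF k0] by simp
    define t where "t = dlap1 p h k / (2 * real n0)"
    have n0r: "real n0 \<ge> 1" using n0_pos by simp
    have tpos: "t > 0" unfolding t_def using pos n0r by simp
    define y where "y i = (if i = k then t else 0)" for i
    define h' where "h' i = h i + y i" for i
    have dy_other: "dlap1 p y i \<ge> 0" if "i \<noteq> k" for i
      unfolding dlap1_q using that tpos by (intro sum_nonneg) (auto simp: y_def)
    have dy_k: "dlap1 p y k = - 2 * real n0 * t"
    proof -
      have "dlap1 p y k = (\<Sum>j\<in>UNIV. if q j \<noteq> 0 then - 2 * t else 0)"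
        unfolding dlap1_q by (rule sum.cong) (auto simp: y_def)
      then show ?thesis using sum_if_q by simp
    qed
    have dh': "dlap1 p h' i = dlap1 p h i + dlap1 p y i" for i
      unfolding h'_def by (rule dlap1_add)
    have "dlap1 p h k \<le> 2 * real n0 * (hi - h k)"
    proof -
      have "dlap1 p h k = (\<Sum>j\<in>UNIV. h (k + q j) + h (k - q j) - 2 * h k)" by (rule dlap1_q)
      also have "\<dots> \<le> (\<Sum>j\<in>UNIV. if q j \<noteq> 0 then 2 * (hi - h k) else 0)"
      proof (rule sum_mono)
        fix j
        show "h (k + q j) + h (k - q j) - 2 * h k \<le> (if q j \<noteq> 0 then 2 * (hi - h k) else 0)"
          using h_hi'[OF nb_range(1)[OF k0, of j]] h_hi'[OF nb_range(2)[OF k0, of j]] by auto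
      qed
      also have "\<dots> = 2 * real n0 * (hi - h k)" using sum_if_q by simp
      finally show ?thesis .
    qed
    then have t_le: "h k + t \<le> hi" unfolding t_def using n0r by (simp add: field_simps)
    have "h' \<in> S" unfolding S_def
    proof (intro CollectI conjI allI impI)
      fix i :: int
      show "i \<le> 0 \<Longrightarrow> h' i = \<phi> i" using k0 by (simp add: h'_def y_def h_def)
      show "i > 0 \<Longrightarrow> h' i \<le> hi" using t_le h_hi by (auto simp: h'_def y_def)
      assume i: "i > 0"
      show "dlap1 p h' i \<ge> 0"
      proof (cases "i = k")
        case True then show ?thesis using dh' dy_k t_def n0r by simp
      next
        case False then show ?thesis using dh' dy_other h_sub[OF i] by (simp add: add_nonneg_nonneg)
      qed
    qed
    then have "h' k \<le> h k" using le_h by blast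
    then show False using tpos by (simp add: h'_def y_def)
  qed
  show ?thesis
  proof (intro exI conjI)
    show "\<forall>k\<le>0. h k = \<phi> k" by (simp add: h_def)
    show "\<forall>k>0. dlap1 p h k = 0" using h_harm by blast
    show "\<forall>k>0. \<bar>h k\<bar> \<le> \<bar>lo\<bar> + \<bar>hi\<bar>"
    proof (intro allI impI)
      fix k :: int assume "k > 0"
      then have "lo \<le> h k" "h k \<le> hi" using h_lo h_hi by auto
      then show "\<bar>h k\<bar> \<le> \<bar>lo\<bar> + \<bar>hi\<bar>" by (simp add: abs_le_iff) linarith
    qed
  qed
qed

end

context gp begin

lemma dlap1_comb:
  "dlap1 p (\<lambda>k. a * x k + b * y (k + s) + c) k = a * dlap1 p x k + b * dlap1 p y (k + s)"
  unfolding dlap1_def sum_distrib_left sum.distrib[symmetric]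
  by (rule sum.cong) (auto simp: algebra_simps)

lemma sum_dec:
  fixes M :: "'d \<Rightarrow> nat" and f :: "'d \<Rightarrow> int"
  assumes "M j > 0"
  shows "(\<Sum>i\<in>UNIV. int (M i) * f i) = (\<Sum>i\<in>UNIV. int ((M(j := M j - 1)) i) * f i) + f j"
    and "sum M UNIV = sum (M(j := M j - 1)) UNIV + 1"
proof -
  have a: "(\<Sum>i\<in>UNIV. int (M i) * f i) = int (M j) * f j + (\<Sum>i\<in>UNIV-{j}. int (M i) * f i)"
    by (rule sum.remove) auto
  have b: "(\<Sum>i\<in>UNIV. int ((M(j := M j - 1)) i) * f i) = int (M j - 1) * f j + (\<Sum>i\<in>UNIV-{j}. int (M i) * f i)"
    by (subst sum.remove[of _ j]) auto
  show "(\<Sum>i\<in>UNIV. int (M i) * f i) = (\<Sum>i\<in>UNIV. int ((M(j := M j - 1)) i) * f i) + f j"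
    using a b assms by (simp add: of_nat_diff algebra_simps)
  have c: "sum M UNIV = M j + sum M (UNIV - {j})" by (rule sum.remove) auto
  have d: "sum (M(j := M j - 1)) UNIV = (M j - 1) + sum M (UNIV - {j})"
    by (subst sum.remove[of _ j]) auto
  show "sum M UNIV = sum (M(j := M j - 1)) UNIV + 1" using c d assms by simp
qed

lemma w_exists:
  "\<exists>w. (\<forall>k\<le>0. w k = (if k = 0 then 1 else 0)) \<and> (\<forall>k>0. dlap1 p w k = 0) \<and>
       (\<exists>M. \<forall>k>0. \<bar>w k\<bar> \<le> M) \<and> (\<forall>k>0. 0 < w k \<and> w k \<le> 1)"
proof -
  obtain w where wb: "\<forall>k\<le>0. w k = (if k = 0 then 1 else 0)" and wh: "\<forall>k>0. dlap1 p w k = 0"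
    and wM: "\<exists>M. \<forall>k>0. \<bar>w k\<bar> \<le> M"
    using perron[of "\<lambda>k. if k = 0 then 1 else 0"] by blast
  obtain M where M: "\<forall>k>0. \<bar>w k\<bar> \<le> M" using wM by blast
  have wnn0: "w k \<ge> 0" if "k > 0" for k
  proof -
    have "- w k \<le> 0"
    proof (rule mp1[where h="\<lambda>k. - w k" and t=0, OF _ _ _ that])
      show "\<forall>k>0. dlap1 p (\<lambda>k. - w k) k = 0" using wh dlap1_cmult[of "-1" w] by simp
    qed (use wb M in \<open>auto simp: abs_le_iff\<close>)
    then show ?thesis by simp
  qed
  have wle1: "w k \<le> 1" if "k > 0" for k
  proof -
    have "w k - 1 \<le> 0"
    proof (rule mp1[where h="\<lambda>k. w k - 1" and t=0, OF _ _ _ that])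
      show "\<forall>k>0. dlap1 p (\<lambda>k. w k - 1) k = 0" using wh dlap1_diff[of w "\<lambda>_. 1"] dlap1_const by simp
      show "\<exists>Ma. \<forall>k>0. w k - 1 \<le> Ma" using M by (auto simp: abs_le_iff intro!: exI[of _ M])
    qed (use wb in auto)
    then show ?thesis by simp
  qed
  have wnn: "w k \<ge> 0" if "k > - mm" for k
    using wnn0 wb that by (cases "k > 0") auto
  have wprop: "w (k + q j) = 0 \<and> w (k - q j) = 0" if k: "k > 0" and wk: "w k = 0" for k j
  proof -
    have nn: "\<forall>i\<in>UNIV. w (k + q i) + w (k - q i) \<ge> 0"
    proof
      fix i :: 'd
      have "w (k + q i) \<ge> 0" "w (k - q i) \<ge> 0" using wnn q_le_mm[of i] q_nonneg[of i] k by auto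
      then show "w (k + q i) + w (k - q i) \<ge> 0" by simp
    qed
    have "(\<Sum>i\<in>UNIV. w (k + q i) + w (k - q i)) = 0"
      using wh[rule_format, OF k] wk unfolding dlap1_q by simp
    then have "\<forall>i\<in>UNIV. w (k + q i) + w (k - q i) = 0"
      using sum_nonneg_eq_0_iff[of UNIV "\<lambda>i. w (k + q i) + w (k - q i)"] nn by simp
    then have "w (k + q j) + w (k - q j) = 0" by simp
    moreover have "w (k + q j) \<ge> 0" "w (k - q j) \<ge> 0"
      using wnn q_le_mm[of j] q_nonneg[of j] k by auto
    ultimately show ?thesis by simp
  qed
  have up: "w (a + int n * q j) = 0" if "a > 0" "w a = 0" for a n j
    using that
  proof (induction n)
    case 0 then show ?case by simp
  next
    case (Suc n)
    have pos: "a + int n * q j > 0" using Suc q_nonneg[of j] by (simp add: add_pos_nonneg)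
    have "w (a + int n * q j + q j) = 0" using wprop[OF pos Suc.IH[OF Suc.prems]] by simp
    then show ?case by (simp add: algebra_simps)
  qed
  have down: "\<forall>M::'d\<Rightarrow>nat. sum M UNIV = n \<longrightarrow> (\<forall>b. b > 0 \<longrightarrow> w b = 0 \<longrightarrow>
        b - (\<Sum>j\<in>UNIV. int (M j) * q j) \<ge> 0 \<longrightarrow> w (b - (\<Sum>j\<in>UNIV. int (M j) * q j)) = 0)" for n
  proof (induction n)
    case 0 then show ?case by simp
  next
    case (Suc n)
    show ?case
    proof (intro allI impI)
      fix M :: "'d \<Rightarrow> nat" and b
      assume sM: "sum M UNIV = Suc n" and b: "b > 0" "w b = 0"
        and ge: "b - (\<Sum>j\<in>UNIV. int (M j) * q j) \<ge> 0"
      have "\<exists>j. M j > 0"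
      proof (rule ccontr)
        assume "\<not> ?thesis"
        then have "sum M UNIV = 0" by simp
        then show False using sM by simp
      qed
      then obtain j where Mj: "M j > 0" by blast
      define M' where "M' = M(j := M j - 1)"
      have s1: "(\<Sum>i\<in>UNIV. int (M i) * q i) = (\<Sum>i\<in>UNIV. int (M' i) * q i) + q j"
        unfolding M'_def by (rule sum_dec(1)[of M j, OF Mj])
      have s2: "sum M' UNIV = n" using sum_dec(2)[of M j, OF Mj] sM unfolding M'_def by simp
      define b' where "b' = b - q j"
      have wb': "w b' = 0" using wprop[OF b] unfolding b'_def by simp
      have nn': "(\<Sum>i\<in>UNIV. int (M' i) * q i) \<ge> 0" using q_nonneg by (intro sum_nonneg) simp
      have eq: "b - (\<Sum>i\<in>UNIV. int (M i) * q i) = b' - (\<Sum>i\<in>UNIV. int (M' i) * q i)"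
        unfolding s1 b'_def by simp
      show "w (b - (\<Sum>j\<in>UNIV. int (M j) * q j)) = 0"
      proof (cases "b' > 0")
        case True
        then show ?thesis unfolding eq using Suc.IH s2 wb' ge eq by simp
      next
        case False
        then have "b' = 0" "(\<Sum>i\<in>UNIV. int (M' i) * q i) = 0" using ge eq nn' by linarith+
        then show ?thesis unfolding eq using wb' by simp
      qed
    qed
  qed
  have pos: "w a > 0" if a: "a > 0" for a
  proof (rule ccontr)
    assume "\<not> w a > 0"
    then have wa: "w a = 0" using wnn0[OF a] by simp
    obtain c where c: "(\<Sum>j\<in>UNIV. c j * p $ j) = 1" using bezout by blast
    define s where "s j = c j * sgn (p $ j)" for j
    have s: "(\<Sum>j\<in>UNIV. s j * q j) = 1"
      unfolding s_def q_def using c by (simp add: mult.assoc sgn_mult_abs)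
    obtain j0 where j0: "p $ j0 \<noteq> 0" using exists_nonzero by blast
    have qj0: "q j0 \<ge> 1" using j0 by (simp add: q_def)
    define K where "K = (\<Sum>j\<in>UNIV. \<bar>a * s j\<bar>)"
    have K: "\<bar>a * s j\<bar> \<le> K" for j
      unfolding K_def by (rule member_le_sum) auto
    define Q where "Q = (\<Sum>j\<in>UNIV. q j)"
    have Q0: "Q \<ge> 0" unfolding Q_def using q_nonneg by (simp add: sum_nonneg)
    have K0: "K \<ge> 0" unfolding K_def by (simp add: sum_nonneg)
    define Mi where "Mi j = a * s j + K * q j0" for j
    have Mi0: "Mi j \<ge> 0" for j
    proof -
      have "K \<le> K * q j0" using K0 qj0 by (simp add: mult_le_cancel_left1)
      then show ?thesis unfolding Mi_def using K[of j] by linarith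
    qed
    define M where "M j = nat (Mi j)" for j
    define n where "n = nat (K * Q)"
    define b where "b = a + int n * q j0"
    have b0: "b > 0" unfolding b_def using a q_nonneg[of j0] by (simp add: add_pos_nonneg)
    have wb0: "w b = 0" unfolding b_def by (rule up[OF a wa])
    have sumM: "(\<Sum>j\<in>UNIV. int (M j) * q j) = a + K * q j0 * Q"
    proof -
      have "(\<Sum>j\<in>UNIV. int (M j) * q j) = (\<Sum>j\<in>UNIV. a * (s j * q j) + K * q j0 * q j)"
        unfolding M_def using Mi0 by (intro sum.cong) (auto simp: Mi_def algebra_simps)
      also have "\<dots> = a + K * q j0 * Q"
        unfolding Q_def sum.distrib sum_distrib_left[symmetric] s by simp
      finally show ?thesis .
    qed
    have "b - (\<Sum>j\<in>UNIV. int (M j) * q j) = 0"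
      unfolding sumM b_def n_def using K0 Q0 by (simp add: algebra_simps)
    then have "w 0 = 0" using down[of "sum M UNIV"] b0 wb0 by (metis order_refl)
    then show False using wb by simp
  qed
  show ?thesis using wb wh wM pos wle1 by blast
qed

end

context gp begin

lemma conv:
  assumes hh: "\<forall>k>0. dlap1 p h k = 0" and hb: "\<exists>M. \<forall>k>0. \<bar>h k\<bar> \<le> M"
  shows "\<exists>L. (h \<longlongrightarrow> L) at_top"
proof -
  obtain w where wb: "\<forall>k\<le>0. w k = (if k = 0 then 1 else 0)" and wh: "\<forall>k>0. dlap1 p w k = 0"
    and wpos: "\<forall>k>0. 0 < w k \<and> w k \<le> 1"
    using w_exists by blast
  obtain Mh where Mh: "\<forall>k>0. \<bar>h k\<bar> \<le> Mh" using hb by blast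
  define \<delta> where "\<delta> = Min (w ` {1..mm})"
  have finI: "finite (w ` {1..mm})" and neI: "w ` {1..mm} \<noteq> {}" using mm_pos by auto
  have \<delta>w: "\<delta> \<le> w a" if "a \<in> {1..mm}" for a
    unfolding \<delta>_def using finI that by (intro Min_le) auto
  have \<delta>pos: "\<delta> > 0" unfolding \<delta>_def using finI neI wpos by (subst Min_gr_iff) auto
  have \<delta>1: "\<delta> \<le> 1"
  proof -
    have "\<delta> \<le> w 1" using \<delta>w mm_pos by simp
    moreover have "w 1 \<le> 1" using wpos by simp
    ultimately show ?thesis by simp
  qed
  define t where "t n = (int n + 1) * mm" for n :: nat
  have tpos: "t n > 0" for n unfolding t_def using mm_pos by simp
  have gt_t: "k > 0" if "k > t n" for k n using tpos[of n] that by linarith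
  have tSuc: "t (Suc n) = t n + mm" for n unfolding t_def by (simp add: algebra_simps)
  define blk where "blk n = {t n - mm + 1 .. t n}" for n
  have finb: "finite (h ` blk n)" for n unfolding blk_def by simp
  have tb: "t n \<in> blk n" for n unfolding blk_def using mm_pos by simp
  have neb: "h ` blk n \<noteq> {}" for n using tb by blast
  define lo where "lo n = Min (h ` blk n)" for n
  define hi where "hi n = Max (h ` blk n)" for n
  have lohi_b: "lo n \<le> h k" "h k \<le> hi n" if "k \<in> blk n" for n k
    unfolding lo_def hi_def using finb that by auto
  have bnd_hi: "h k \<le> hi n" if k: "k > t n" for n k
  proof -
    have "h k - hi n \<le> 0"
    proof (rule mp1[where h="\<lambda>k. h k - hi n" and t="t n", OF _ _ _ k])
      show "\<forall>k>t n. dlap1 p (\<lambda>k. h k - hi n) k = 0"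
        using hh gt_t dlap1_diff[of h "\<lambda>_. hi n"] dlap1_const by simp
      show "\<forall>k. t n - mm < k \<and> k \<le> t n \<longrightarrow> h k - hi n \<le> 0"
        using lohi_b(2) unfolding blk_def by force
      show "\<exists>M. \<forall>k>t n. h k - hi n \<le> M"
        using Mh gt_t by (intro exI[of _ "Mh - hi n"]) (force simp: abs_le_iff)
    qed
    then show ?thesis by simp
  qed
  have bnd_lo: "lo n \<le> h k" if k: "k > t n" for n k
  proof -
    have "lo n - h k \<le> 0"
    proof (rule mp1[where h="\<lambda>k. lo n - h k" and t="t n", OF _ _ _ k])
      show "\<forall>k>t n. dlap1 p (\<lambda>k. lo n - h k) k = 0"
        using hh gt_t dlap1_diff[of "\<lambda>_. lo n" h] dlap1_const by simp
      show "\<forall>k. t n - mm < k \<and> k \<le> t n \<longrightarrow> lo n - h k \<le> 0"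
        using lohi_b(1) unfolding blk_def by force
      show "\<exists>M. \<forall>k>t n. lo n - h k \<le> M"
        using Mh gt_t by (intro exI[of _ "Mh + lo n"]) (force simp: abs_le_iff)
    qed
    then show ?thesis by simp
  qed
  have blkSuc: "k > t n" "k - t n \<in> {1..mm}" if "k \<in> blk (Suc n)" for n k
    using that unfolding blk_def tSuc by auto
  have w0: "w 0 = 1" using wb by simp
  have wshift: "w (k + - t n) = (if k = t n then 1 else 0)" if "t n - mm < k" "k \<le> t n" for n k
    using wb that by auto
  have step_hi: "h k \<le> hi n - \<delta> * (hi n - h (t n))" if kb: "k \<in> blk (Suc n)" for n k
  proof -
    define c where "c = hi n - h (t n)"
    have c0: "c \<ge> 0" unfolding c_def using lohi_b(2)[OF tb] by simp
    have "1 * h k + c * w (k + - t n) + - hi n \<le> 0"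
    proof (rule mp1[where h="\<lambda>k. 1 * h k + c * w (k + - t n) + - hi n" and t="t n", OF _ _ _ blkSuc(1)[OF kb]])
      show "\<forall>k>t n. dlap1 p (\<lambda>k. 1 * h k + c * w (k + - t n) + - hi n) k = 0"
      proof (intro allI impI)
        fix k assume k: "k > t n"
        then have "k + - t n > 0" by simp
        then show "dlap1 p (\<lambda>k. 1 * h k + c * w (k + - t n) + - hi n) k = 0" unfolding dlap1_comb using hh wh gt_t[OF k] by simp
      qed
      show "\<forall>k. t n - mm < k \<and> k \<le> t n \<longrightarrow> 1 * h k + c * w (k + - t n) + - hi n \<le> 0"
      proof (intro allI impI)
        fix k assume k: "t n - mm < k \<and> k \<le> t n"
        show "1 * h k + c * w (k + - t n) + - hi n \<le> 0"
        proof (cases "k = t n")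
          case True then show ?thesis using w0 by (simp add: c_def)
        next
          case False
          then have "h k \<le> hi n" using lohi_b(2)[of k n] k unfolding blk_def by auto
          then show ?thesis using wshift k False by simp
        qed
      qed
      show "\<exists>M. \<forall>k>t n. 1 * h k + c * w (k + - t n) + - hi n \<le> M"
      proof (intro exI allI impI)
        fix k assume k: "k > t n"
        have "h k \<le> Mh" using Mh gt_t[OF k] by (force simp: abs_le_iff)
        moreover have "c * w (k + - t n) \<le> c * 1" using wpos k c0 by (intro mult_left_mono) auto
        ultimately show "1 * h k + c * w (k + - t n) + - hi n \<le> Mh + c - hi n" by simp
      qed
    qed
    moreover have "c * \<delta> \<le> c * w (k - t n)" using c0 \<delta>w[OF blkSuc(2)[OF kb]] by (intro mult_left_mono) auto
    ultimately show ?thesis unfolding c_def by (simp add: algebra_simps)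
  qed
  have step_lo: "lo n + \<delta> * (h (t n) - lo n) \<le> h k" if kb: "k \<in> blk (Suc n)" for n k
  proof -
    define c where "c = h (t n) - lo n"
    have c0: "c \<ge> 0" unfolding c_def using lohi_b(1)[OF tb] by simp
    have "(-1) * h k + c * w (k + - t n) + lo n \<le> 0"
    proof (rule mp1[where h="\<lambda>k. (-1) * h k + c * w (k + - t n) + lo n" and t="t n", OF _ _ _ blkSuc(1)[OF kb]])
      show "\<forall>k>t n. dlap1 p (\<lambda>k. (-1) * h k + c * w (k + - t n) + lo n) k = 0"
      proof (intro allI impI)
        fix k assume k: "k > t n"
        then have "k + - t n > 0" by simp
        then show "dlap1 p (\<lambda>k. (-1) * h k + c * w (k + - t n) + lo n) k = 0" unfolding dlap1_comb using hh wh gt_t[OF k] by simp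
      qed
      show "\<forall>k. t n - mm < k \<and> k \<le> t n \<longrightarrow> (-1) * h k + c * w (k + - t n) + lo n \<le> 0"
      proof (intro allI impI)
        fix k assume k: "t n - mm < k \<and> k \<le> t n"
        show "(-1) * h k + c * w (k + - t n) + lo n \<le> 0"
        proof (cases "k = t n")
          case True then show ?thesis using w0 by (simp add: c_def)
        next
          case False
          then have "lo n \<le> h k" using lohi_b(1)[of k n] k unfolding blk_def by auto
          then show ?thesis using wshift k False by simp
        qed
      qed
      show "\<exists>M. \<forall>k>t n. (-1) * h k + c * w (k + - t n) + lo n \<le> M"
      proof (intro exI allI impI)
        fix k assume k: "k > t n"
        have "- h k \<le> Mh" using Mh gt_t[OF k] by (force simp: abs_le_iff)
        moreover have "c * w (k + - t n) \<le> c * 1" using wpos k c0 by (intro mult_left_mono) auto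
        ultimately show "(-1) * h k + c * w (k + - t n) + lo n \<le> Mh + c + lo n" by simp
      qed
    qed
    moreover have "c * \<delta> \<le> c * w (k - t n)" using c0 \<delta>w[OF blkSuc(2)[OF kb]] by (intro mult_left_mono) auto
    ultimately show ?thesis unfolding c_def by (simp add: algebra_simps)
  qed
  have hiSuc: "hi (Suc n) \<le> hi n - \<delta> * (hi n - h (t n))" for n
    unfolding hi_def[of "Suc n"] using finb neb step_hi by (subst Max_le_iff) auto
  have loSuc: "lo n + \<delta> * (h (t n) - lo n) \<le> lo (Suc n)" for n
    unfolding lo_def[of "Suc n"] using finb neb step_lo by (subst Min_ge_iff) auto
  have osc: "hi (Suc n) - lo (Suc n) \<le> (1 - \<delta>) * (hi n - lo n)" for n
  proof -
    have "hi (Suc n) - lo (Suc n) \<le> (hi n - \<delta> * (hi n - h (t n))) - (lo n + \<delta> * (h (t n) - lo n))"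
      using hiSuc[of n] loSuc[of n] by linarith
    also have "\<dots> = (1 - \<delta>) * (hi n - lo n)" by (simp add: algebra_simps)
    finally show ?thesis .
  qed
  have hi_dec: "hi (Suc n) \<le> hi n" for n
    unfolding hi_def[of "Suc n"] using finb neb bnd_hi blkSuc(1) by (subst Max_le_iff) auto
  have lo_inc: "lo n \<le> lo (Suc n)" for n
    unfolding lo_def[of "Suc n"] using finb neb bnd_lo blkSuc(1) by (subst Min_ge_iff) auto
  have lohi: "lo n \<le> hi n" for n using lohi_b[OF tb] by (meson order_trans)
  have lo_mono: "lo m \<le> lo n" if "m \<le> n" for m n
    using lift_Suc_mono_le[of lo, OF lo_inc that] .
  have hi_mono: "hi n \<le> hi m" if "m \<le> n" for m n
    using lift_Suc_antimono_le[of hi, OF hi_dec that] .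
  define C where "C = hi 0 - lo 0"
  have osc_n: "hi n - lo n \<le> (1 - \<delta>) ^ n * C" for n
  proof (induction n)
    case 0 then show ?case by (simp add: C_def)
  next
    case (Suc n)
    have "hi (Suc n) - lo (Suc n) \<le> (1 - \<delta>) * (hi n - lo n)" by (rule osc)
    also have "\<dots> \<le> (1 - \<delta>) * ((1 - \<delta>) ^ n * C)" using Suc \<delta>1 by (intro mult_left_mono) auto
    finally show ?case by simp
  qed
  define L where "L = Sup (range lo)"
  have lo_hi_any: "lo m \<le> hi n" for m n
    using lo_mono[of m "max m n"] lohi[of "max m n"] hi_mono[of n "max m n"] by simp
  have loL: "lo n \<le> L" for n unfolding L_def
    by (rule cSup_upper) (use lo_hi_any in \<open>auto intro!: bdd_aboveI[of _ "hi 0"]\<close>)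
  have Lhi: "L \<le> hi n" for n unfolding L_def
    by (rule cSup_least) (use lo_hi_any in auto)
  have close: "\<bar>h k - L\<bar> \<le> (1 - \<delta>) ^ n * C" if "k > t n" for n k
    using bnd_hi[OF that] bnd_lo[OF that] loL[of n] Lhi[of n] osc_n[of n] by (simp add: abs_le_iff)
  have lim0: "(\<lambda>n. (1 - \<delta>) ^ n * C) \<longlonglongrightarrow> 0"
    using \<delta>pos \<delta>1 by (intro tendsto_mult_left_zero LIMSEQ_power_zero) auto
  have "(h \<longlongrightarrow> L) at_top"
  proof (rule tendstoI)
    fix \<epsilon> :: real assume e: "\<epsilon> > 0"
    obtain n0 where n0: "\<forall>n\<ge>n0. norm ((1 - \<delta>) ^ n * C - 0) < \<epsilon>" using LIMSEQ_D[OF lim0 e] by blast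
    have "\<forall>k\<ge>t n0 + 1. dist (h k) L < \<epsilon>"
    proof (intro allI impI)
      fix k assume "k \<ge> t n0 + 1"
      then have "\<bar>h k - L\<bar> \<le> (1 - \<delta>) ^ n0 * C" using close[of n0 k] by simp
      moreover have "\<bar>(1 - \<delta>) ^ n0 * C\<bar> < \<epsilon>" using n0 by simp
      ultimately show "dist (h k) L < \<epsilon>" by (simp add: dist_real_def)
    qed
    then show "eventually (\<lambda>k. dist (h k) L < \<epsilon>) at_top"
      unfolding eventually_at_top_linorder by blast
  qed
  then show ?thesis by blast
qed

end

context gp begin

definition Wr :: "(int \<Rightarrow> real) \<Rightarrow> (int \<Rightarrow> real) \<Rightarrow> int \<Rightarrow> real" where
  "Wr x y n = (\<Sum>j\<in>UNIV. \<Sum>i<nat (q j).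
      x (n - int i) * y (n - int i + q j) - x (n - int i + q j) * y (n - int i))"

lemma Wr_step: "Wr x y n - Wr x y (n - 1) = x n * dlap1 p y n - y n * dlap1 p x n"
proof -
  define F where "F j s = x s * y (s + q j) - x (s + q j) * y s" for j s
  have per: "(\<Sum>i<nat (q j). F j (n - int i)) - (\<Sum>i<nat (q j). F j (n - 1 - int i))
             = F j n - F j (n - q j)" for j
  proof -
    have "(\<Sum>i<nat (q j). F j (n - int i)) - (\<Sum>i<nat (q j). F j (n - 1 - int i))
        = (\<Sum>i<nat (q j). F j (n - int i) - F j (n - int (Suc i)))"
      by (simp add: sum_subtractf algebra_simps)
    also have "\<dots> = F j (n - int 0) - F j (n - int (nat (q j)))"
      by (rule sum_lessThan_telescope')
    also have "\<dots> = F j n - F j (n - q j)" using q_nonneg[of j] by simp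
    finally show ?thesis .
  qed
  have "Wr x y n - Wr x y (n - 1) = (\<Sum>j\<in>UNIV. F j n - F j (n - q j))"
    unfolding Wr_def F_def[symmetric] per[symmetric]
    by (simp add: sum_subtractf algebra_simps)
  also have "\<dots> = x n * dlap1 p y n - y n * dlap1 p x n"
    unfolding dlap1_q sum_distrib_left sum_subtractf[symmetric]
    by (rule sum.cong) (simp_all add: F_def algebra_simps)
  finally show ?thesis .
qed

lemma Wr_const:
  assumes "\<forall>k>0. dlap1 p x k = 0" "\<forall>k>0. dlap1 p y k = 0" "n \<ge> 0"
  shows "Wr x y n = Wr x y 0"
  using assms(3)
proof (induction n rule: int_ge_induct)
  case base then show ?case by simp
next
  case (step i)
  have "Wr x y (i + 1) - Wr x y (i + 1 - 1) = 0"
    unfolding Wr_step using assms(1,2) step(1) by simp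
  then show ?case using step by simp
qed

lemma Wr_lim:
  assumes "\<forall>k>0. dlap1 p x k = 0" "\<forall>k>0. dlap1 p y k = 0"
    and "((\<lambda>n. Wr x y n) \<longlongrightarrow> L) at_top"
  shows "Wr x y 0 = L"
proof -
  have "\<forall>n\<ge>0. Wr x y n = Wr x y 0"
  proof (intro allI impI)
    fix n :: int assume "n \<ge> 0"
    from Wr_const[OF assms(1,2) this] show "Wr x y n = Wr x y 0" .
  qed
  then have "eventually (\<lambda>n. Wr x y n = Wr x y 0) at_top"
    unfolding eventually_at_top_linorder by (intro exI[of _ 0])
  then have "((\<lambda>n. Wr x y n) \<longlongrightarrow> Wr x y 0) at_top"
    by (rule tendsto_eventually)
  from tendsto_unique[OF trivial_limit_at_top_linorder this assms(3)] show ?thesis .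
qed

lemma shift_lim:
  fixes g :: "int \<Rightarrow> real"
  assumes "(g \<longlongrightarrow> 0) at_top"
  shows "((\<lambda>n. g (n + a)) \<longlongrightarrow> 0) at_top"
proof (rule tendstoI)
  fix e :: real assume e: "e > 0"
  from tendstoD[OF assms e] obtain N where N: "\<forall>n\<ge>N. dist (g n) 0 < e"
    unfolding eventually_at_top_linorder by blast
  show "eventually (\<lambda>n. dist (g (n + a)) 0 < e) at_top"
    unfolding eventually_at_top_linorder by (rule exI[of _ "N - a"]) (use N in auto)
qed

end

context gp begin

lemma key_identity:
  fixes f e :: "int \<Rightarrow> real"
  assumes fdef: "\<And>k. f k = real_of_int k + e k"
  and f0: "\<forall>k\<le>0. f k = 0"
  and eh: "\<forall>k>0. dlap1 p e k = 0"
  and elim: "(e \<longlongrightarrow> c) at_top"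
  shows "f 1 * dlap1 p f 0 = real_of_int (\<Sum>j\<in>UNIV. (p $ j)^2)"
proof -
  define \<epsilon> where "\<epsilon> k = e k - c" for k
  have fe: "f k = real_of_int k + c + \<epsilon> k" for k unfolding \<epsilon>_def fdef by simp
  have \<epsilon>0: "(\<epsilon> \<longlongrightarrow> 0) at_top" unfolding \<epsilon>_def using elim
    by (intro tendsto_eq_intros) auto
  have \<epsilon>s: "((\<lambda>n. \<epsilon> (n + a)) \<longlongrightarrow> 0) at_top" for a by (rule shift_lim[OF \<epsilon>0])
  have fh: "\<forall>k>0. dlap1 p f k = 0"
    using eh dlap1_add[of "\<lambda>k. real_of_int k" e] dlap1_id unfolding fdef by simp
  define f1 where "f1 k = f (k + 1)" for k
  have f1h: "\<forall>k>0. dlap1 p f1 k = 0" unfolding f1_def dlap1_shift using fh by simp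
  define D where "D k = \<epsilon> (k + 1) - \<epsilon> k" for k
  have \<epsilon>h: "\<forall>k>0. dlap1 p \<epsilon> k = 0"
    using eh dlap1_diff[of e "\<lambda>_. c"] dlap1_const unfolding \<epsilon>_def by simp
  have Dh: "\<forall>k>0. dlap1 p D k = 0"
  proof (intro allI impI)
    fix k :: int assume k: "k > 0"
    have "dlap1 p D k = dlap1 p (\<lambda>k. \<epsilon> (k + 1)) k - dlap1 p \<epsilon> k"
      unfolding D_def by (rule dlap1_diff)
    also have "\<dots> = 0" unfolding dlap1_shift using \<epsilon>h k by simp
    finally show "dlap1 p D k = 0" .
  qed
  have Ds: "((\<lambda>n. D (n + a)) \<longlongrightarrow> 0) at_top" for a
    unfolding D_def using \<epsilon>s[of "a + 1"] \<epsilon>s[of a] by (simp add: tendsto_diff[where b=0 and a=0, simplified] algebra_simps)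
  have one_h: "\<forall>k>0. dlap1 p (\<lambda>_. 1) k = 0" using dlap1_const by simp
  have Phi_lim: "((\<lambda>n. Wr (\<lambda>_. 1) D n) \<longlongrightarrow> 0) at_top"
    unfolding Wr_def
  proof (intro tendsto_null_sum)
    fix j i
    show "((\<lambda>n. 1 * D (n - int i + q j) - 1 * D (n - int i)) \<longlongrightarrow> 0) at_top"
      using Ds[of "- int i + q j"] Ds[of "- int i"] tendsto_diff by (fastforce simp: algebra_simps)
  qed
  have Phi0: "Wr (\<lambda>_. 1) D n = 0" if "n \<ge> 0" for n
    using Wr_const[OF one_h Dh that] Wr_lim[OF one_h Dh Phi_lim] by simp
  define R where "R j i n =
      (- real i) * (\<epsilon> (n + (- int i + q j + 1)) - \<epsilon> (n + (- int i + q j)) - \<epsilon> (n + (- int i + 1)) + \<epsilon> (n + (- int i)))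
      + \<epsilon> (n + (- int i)) * (real_of_int (q j) + 1) - real_of_int (q j) * \<epsilon> (n + (- int i + 1)) - \<epsilon> (n + (- int i + q j))
      + \<epsilon> (n + (- int i)) * \<epsilon> (n + (- int i + q j + 1)) - \<epsilon> (n + (- int i + 1)) * \<epsilon> (n + (- int i + q j))" for j i n
  have R0: "((\<lambda>n. R j i n) \<longlongrightarrow> 0) at_top" for j i
    unfolding R_def
    by (rule tendsto_eq_intros \<epsilon>s refl | simp)+
  have term_id: "f (n - int i) * f1 (n - int i + q j) - f (n - int i + q j) * f1 (n - int i)
      = - real_of_int (q j) + (real_of_int n + c) * (1 * D (n - int i + q j) - 1 * D (n - int i)) + R j i n" for n j i
    unfolding f1_def fe R_def D_def by (simp add: algebra_simps)
  have decomp: "Wr f f1 n = - real_of_int (\<Sum>j\<in>UNIV. (q j)^2) + (real_of_int n + c) * Wr (\<lambda>_. 1) D n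
                 + (\<Sum>j\<in>UNIV. \<Sum>i<nat (q j). R j i n)" for n
  proof -
    have "Wr f f1 n = (\<Sum>j\<in>UNIV. \<Sum>i<nat (q j). - real_of_int (q j)
        + (real_of_int n + c) * (1 * D (n - int i + q j) - 1 * D (n - int i)) + R j i n)"
      unfolding Wr_def term_id ..
    also have "\<dots> = (\<Sum>j\<in>UNIV. - real_of_int ((q j)^2)) + (real_of_int n + c) * Wr (\<lambda>_. 1) D n
                 + (\<Sum>j\<in>UNIV. \<Sum>i<nat (q j). R j i n)"
      unfolding Wr_def sum.distrib sum_distrib_left using q_nonneg
      by (simp add: power2_eq_square)
    finally show ?thesis by (simp add: sum_negf)
  qed
  have Wlim: "((\<lambda>n. Wr f f1 n) \<longlongrightarrow> - real_of_int (\<Sum>j\<in>UNIV. (q j)^2)) at_top"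
  proof -
    have ev: "eventually (\<lambda>n. - real_of_int (\<Sum>j\<in>UNIV. (q j)^2) + (\<Sum>j\<in>UNIV. \<Sum>i<nat (q j). R j i n) = Wr f f1 n) at_top"
      unfolding eventually_at_top_linorder using decomp Phi0 by (intro exI[of _ 0]) auto
    have "((\<lambda>n. - real_of_int (\<Sum>j\<in>UNIV. (q j)^2) + (\<Sum>j\<in>UNIV. \<Sum>i<nat (q j). R j i n))
            \<longlongrightarrow> - real_of_int (\<Sum>j\<in>UNIV. (q j)^2) + 0) at_top"
      by (intro tendsto_add tendsto_const tendsto_null_sum R0)
    then show ?thesis using tendsto_cong[OF ev] by simp
  qed
  have W0a: "Wr f f1 0 = - real_of_int (\<Sum>j\<in>UNIV. (q j)^2)" by (rule Wr_lim[OF fh f1h Wlim])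
  have W0b: "Wr f f1 0 = - f 1 * dlap1 p f 0"
  proof -
    have inner: "(\<Sum>i<nat (q j). f (0 - int i) * f1 (0 - int i + q j) - f (0 - int i + q j) * f1 (0 - int i))
          = - f 1 * f (q j)" for j
    proof -
      have "(\<Sum>i<nat (q j). f (0 - int i) * f1 (0 - int i + q j) - f (0 - int i + q j) * f1 (0 - int i))
           = (\<Sum>i<nat (q j). if i = 0 then - f 1 * f (q j) else 0)"
        by (rule sum.cong) (use f0 in \<open>auto simp: f1_def\<close>)
      also have "\<dots> = - f 1 * f (q j)"
        using f0 q_nonneg[of j] by (subst sum.delta) auto
      finally show ?thesis .
    qed
    have "dlap1 p f 0 = (\<Sum>j\<in>UNIV. f (q j))"
      unfolding dlap1_q by (rule sum.cong) (use f0 q_nonneg in auto)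
    then show ?thesis unfolding Wr_def inner by (simp add: sum_distrib_left)
  qed
  have "(\<Sum>j\<in>UNIV. (q j)^2) = (\<Sum>j\<in>UNIV. (p $ j)^2)" unfolding q_def by simp
  then show ?thesis using W0a W0b by simp
qed

end

lemma dlap_diff: "dlap (\<lambda>x. a x - b x) x = dlap a x - dlap b x"
  unfolding dlap_def sum_subtractf[symmetric] by (rule sum.cong) auto

context gp begin

theorem main_loc:
  "(\<exists>!g. line_sol p g) \<and>
   (\<forall>g. line_sol p g \<longrightarrow>
      (\<exists>L. (g \<longlongrightarrow> L) at_top \<and> Hfun p = real_of_int (\<Sum>i\<in>UNIV. (p $ i)^2) * L))"
proof -
  obtain e where e0: "\<forall>k\<le>0. e k = - real_of_int k" and eh: "\<forall>k>0. dlap1 p e k = 0"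
    and eM: "\<exists>M. \<forall>k>0. \<bar>e k\<bar> \<le> M"
    using perron[of "\<lambda>k. - real_of_int k"] by blast
  obtain Me where Me: "\<forall>k>0. \<bar>e k\<bar> \<le> Me" using eM by blast
  obtain c where elim: "(e \<longlongrightarrow> c) at_top" using conv[OF eh eM] by blast
  define f where "f k = real_of_int k + e k" for k
  have f0: "\<forall>k\<le>0. f k = 0" using e0 by (simp add: f_def)
  have fh: "\<forall>k>0. dlap1 p f k = 0"
    using eh dlap1_add[of "\<lambda>k. real_of_int k" e] dlap1_id unfolding f_def by simp
  have KI: "f 1 * dlap1 p f 0 = real_of_int (\<Sum>j\<in>UNIV. (p $ j)^2)"
    by (rule key_identity[OF f_def f0 eh elim])
  have Sp: "(\<Sum>j\<in>UNIV. (p $ j)^2) > 0"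
  proof -
    obtain j where "p $ j \<noteq> 0" using exists_nonzero by blast
    then show ?thesis by (intro sum_pos2[of UNIV j]) auto
  qed
  have f1: "f 1 \<noteq> 0"
  proof
    assume "f 1 = 0"
    then have "real_of_int (\<Sum>j\<in>UNIV. (p $ j)^2) = 0" using KI by simp
    then have "(\<Sum>j\<in>UNIV. (p $ j)^2) = 0" by (simp only: of_int_eq_0_iff)
    then show False using Sp by simp
  qed
  define u where "u x = f (idot p x)" for x
  have dlu: "dlap u x = dlap1 p f (idot p x)" for x unfolding u_def by (rule dlap_comp)
  have usol: "halfspace_sol p u"
    unfolding halfspace_sol_def
  proof (intro conjI allI impI)
    fix x show "idot p x > 0 \<Longrightarrow> dlap u x = 0" using fh dlu by simp
    show "idot p x \<le> 0 \<Longrightarrow> u x = 0" using f0 by (simp add: u_def)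
  next
    show "\<exists>M. \<forall>x. 0 < idot p x \<longrightarrow> \<bar>u x - real_of_int (idot p x)\<bar> \<le> M"
      using Me by (intro exI[of _ Me]) (simp add: u_def f_def)
  qed
  have uuniq: "u' = u" if u': "halfspace_sol p u'" for u'
  proof
    fix x
    obtain M1 where M1: "\<forall>x. 0 < idot p x \<longrightarrow> \<bar>u' x - real_of_int (idot p x)\<bar> \<le> M1"
      and h1: "\<forall>x. idot p x > 0 \<longrightarrow> dlap u' x = 0" and z1: "\<forall>x. idot p x \<le> 0 \<longrightarrow> u' x = 0"
      using u' unfolding halfspace_sol_def by blast
    have bd: "\<bar>u' y - u y\<bar> \<le> M1 + Me" if "idot p y > 0" for y
    proof -
      have "\<bar>u y - real_of_int (idot p y)\<bar> \<le> Me" using Me that by (simp add: u_def f_def)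
      then show ?thesis using M1 that by (smt (verit))
    qed
    have "u' x - u x \<le> 0"
    proof (rule mp_d[where v="\<lambda>x. u' x - u x"])
      show "\<forall>x. 0 < idot p x \<longrightarrow> dlap (\<lambda>x. u' x - u x) x = 0"
        using h1 usol unfolding dlap_diff halfspace_sol_def by simp
      show "\<forall>x. idot p x \<le> 0 \<longrightarrow> u' x - u x \<le> 0" using z1 usol unfolding halfspace_sol_def by simp
      show "\<exists>M. \<forall>x. 0 < idot p x \<longrightarrow> u' x - u x \<le> M"
        using bd by (intro exI[of _ "M1 + Me"]) (simp add: abs_le_iff)
    qed
    moreover have "u x - u' x \<le> 0"
    proof (rule mp_d[where v="\<lambda>x. u x - u' x"])
      show "\<forall>x. 0 < idot p x \<longrightarrow> dlap (\<lambda>x. u x - u' x) x = 0"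
        using h1 usol unfolding dlap_diff halfspace_sol_def by simp
      show "\<forall>x. idot p x \<le> 0 \<longrightarrow> u x - u' x \<le> 0" using z1 usol unfolding halfspace_sol_def by simp
      show "\<exists>M. \<forall>x. 0 < idot p x \<longrightarrow> u x - u' x \<le> M"
        using bd by (intro exI[of _ "M1 + Me"]) (simp add: abs_le_iff)
    qed
    ultimately show "u' x = u x" by simp
  qed
  have the_u: "(THE u. halfspace_sol p u) = u"
    by (rule the_equality[where P="halfspace_sol p", OF usol uuniq])
  have H: "Hfun p = dlap1 p f 0"
    unfolding Hfun_def the_u dlu idot_zero ..
  define g0 where "g0 k = (-1 / f 1) * f k + (1 / f 1) * f (k + 1) + 0" for k
  have g0sol: "line_sol p g0"
    unfolding line_sol_def
  proof (intro conjI allI impI)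
    fix k :: int
    show "k > 0 \<Longrightarrow> dlap1 p g0 k = 0"
      unfolding g0_def dlap1_comb using fh by simp
    show "k < 0 \<Longrightarrow> g0 k = 0" using f0 by (simp add: g0_def)
  next
    show "g0 0 = 1" using f0 f1 by (simp add: g0_def)
    show "\<exists>M. \<forall>k>0. \<bar>g0 k\<bar> \<le> M"
    proof (intro exI allI impI)
      fix k :: int assume k: "k > 0"
      have "g0 k = (f (k + 1) - f k) / f 1" unfolding g0_def by (simp add: diff_divide_distrib)
      moreover have "f (k + 1) - f k = 1 + e (k + 1) - e k" by (simp add: f_def)
      ultimately have geq: "g0 k = (1 + e (k + 1) - e k) / f 1" by simp
      have "\<bar>e (k + 1)\<bar> \<le> Me" "\<bar>e k\<bar> \<le> Me" using Me k by auto
      then have "\<bar>1 + e (k + 1) - e k\<bar> \<le> 1 + 2 * Me" by (simp add: abs_le_iff)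
      then have "\<bar>(1 + e (k + 1) - e k) / f 1\<bar> \<le> (1 + 2 * Me) / \<bar>f 1\<bar>"
        using f1 by (simp add: abs_divide divide_right_mono)
      then show "\<bar>g0 k\<bar> \<le> (1 + 2 * Me) / \<bar>f 1\<bar>" using geq by simp
    qed
  qed
  have g0uniq: "g = g0" if g: "line_sol p g" for g
  proof
    fix k
    obtain Mg where Mg: "\<forall>k>0. \<bar>g k\<bar> \<le> Mg" and gh: "\<forall>k>0. dlap1 p g k = 0"
      and g0': "g 0 = 1" and gneg: "\<forall>k<0. g k = 0"
      using g unfolding line_sol_def by blast
    obtain M0 where M0: "\<forall>k>0. \<bar>g0 k\<bar> \<le> M0" and g0h: "\<forall>k>0. dlap1 p g0 k = 0"
      and g00: "g0 0 = 1" and g0neg: "\<forall>k<0. g0 k = 0"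
      using g0sol unfolding line_sol_def by blast
    show "g k = g0 k"
    proof (cases "k > 0")
      case True
      have "g k - g0 k = 0"
      proof (rule uniq1[where h="\<lambda>k. g k - g0 k" and t=0, OF _ _ _ True])
        show "\<forall>k>0. dlap1 p (\<lambda>k. g k - g0 k) k = 0" using gh g0h dlap1_diff[of g g0] by simp
        show "\<forall>k. 0 - mm < k \<and> k \<le> 0 \<longrightarrow> g k - g0 k = 0"
          using g0' g00 gneg g0neg by (metis diff_self le_less)
        show "\<exists>M. \<forall>k>0. \<bar>g k - g0 k\<bar> \<le> M"
          using Mg M0 by (intro exI[of _ "Mg + M0"]) (smt (verit))
      qed
      then show ?thesis by simp
    next
      case False
      then show ?thesis using g0' g00 gneg g0neg by (cases "k = 0") auto
    qed
  qed
  have g0lim: "(g0 \<longlongrightarrow> 1 / f 1) at_top"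
  proof -
    have ec: "((\<lambda>k. e k - c) \<longlongrightarrow> 0) at_top" using elim by (intro tendsto_eq_intros) auto
    have ec1: "((\<lambda>k. e (k + 1) - c) \<longlongrightarrow> 0) at_top" using shift_lim[OF ec, of 1] by simp
    have eq: "g0 k = (1 + (e (k + 1) - c) - (e k - c)) / f 1" for k
    proof -
      have "g0 k = (f (k + 1) - f k) / f 1" unfolding g0_def by (simp add: diff_divide_distrib)
      also have "f (k + 1) - f k = 1 + (e (k + 1) - c) - (e k - c)" by (simp add: f_def)
      finally show ?thesis .
    qed
    have "((\<lambda>k. (1 + (e (k + 1) - c) - (e k - c)) / f 1) \<longlongrightarrow> (1 + 0 - 0) / f 1) at_top"
      by (intro tendsto_divide tendsto_diff tendsto_add tendsto_const ec ec1 f1)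
    then show ?thesis unfolding eq[abs_def, symmetric] by simp
  qed
  have Hval: "Hfun p = real_of_int (\<Sum>i\<in>UNIV. (p $ i)^2) * (1 / f 1)"
    using H KI f1 by (simp add: field_simps)
  show ?thesis
  proof (intro conjI allI impI)
    show "\<exists>!g. line_sol p g" using g0sol g0uniq by blast
    fix g assume "line_sol p g"
    then have "g = g0" by (rule g0uniq)
    then show "\<exists>L. (g \<longlongrightarrow> L) at_top \<and> Hfun p = real_of_int (\<Sum>i\<in>UNIV. (p $ i)^2) * L"
      using g0lim Hval by blast
  qed
qed

end

theorem mainTheorem6:
  fixes p :: "int ^ 'd"
  assumes "Gcd (range (\<lambda>i. p $ i)) = 1"
  shows "(\<exists>!g. line_sol p g) \<and>
         (\<forall>g. line_sol p g \<longrightarrow>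
            (\<exists>L. (g \<longlongrightarrow> L) at_top \<and>
                 Hfun p = real_of_int (\<Sum>i\<in>UNIV. (p $ i)^2) * L))"
proof -
  interpret gp p by unfold_locales (rule assms)
  show ?thesis by (rule main_loc)
qed

end
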